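(* Let $H$ be an abelian group with an alternating $\mathbb{Z}$-bilinear form $\langle-,-\rangle$, and let $z\in\ker\mu$. Then the kernel of the composition \[ Z_2(\mathbb{Q}[H^{(1)}])_{(z)}\longrightarrow C_2(\mathbb{Q}[H])_{(z)}\longrightarrow \hat C_2(\mathbb{Q}[H])_{(z)}, \] where the first map is induced by the inclusion $\mathbb{Q}[H^{(1)}]\hookrightarrow\mathbb{Q}[H]$ and the second is the quotient projection, equals $B_2(\mathbb{Q}[H^{(1)}])_{(z)}$.
   Context: $\mu:H\to\mathrm{Hom}_{\mathbb{Z}}(H,\mathbb{Z})$, $\mu(x)(y)=\langle x,y\rangle$; $H^{(1)}:=H\setminus\ker\mu$. $\mathbb{Q}[S]$ ($S\subset H$) is the $\mathbb{Q}$-vector space with basis symbols $[x]$, $x\in S$; $\mathbb{Q}[H]$ is a Lie algebra via $[[x],[y]]=\langle x,y\rangle[x+y]$ and $\mathbb{Q}[H^{(1)}]$ is a Lie subalgebra. Chevalley–Eilenberg chains: $C_p(\mathfrak g)=\bigwedge^p_{\mathbb{Q}}\mathfrak g$, $\partial(x_1\wedge\cdots\wedge x_p)=\sum_{i<j}(-1)^{i+j}[x_i,x_j]\wedge x_1\wedge\cdots\widehat{x_i}\cdots\widehat{x_j}\cdots\wedge x_p$. For $S\in\{H,H^{(1)}\}$, $p>0$, $w\in H$, $C_p(\mathbb{Q}[S])_{(w)}$ is the span of $[u_1]\wedge\cdots\wedge[u_p]$ with $u_i\in S$, $\sum u_i=w$; this is a subcomplex, with cycles $Z_p(\mathbb{Q}[S])_{(w)}$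 and boundaries $B_p(\mathbb{Q}[S])_{(w)}$ (boundaries of elements of $C_{p+1}(\mathbb{Q}[S])_{(w)}$). $\hat I$ is the ideal of $\bigwedge\mathbb{Q}[H]$ generated by all $[u+v]\wedge[x]-[u]\wedge[x+v]-[v]\wedge[x+u]$, $u,v,x\in H$; $\hat C_2(\mathbb{Q}[H])_{(w)}=C_2(\mathbb{Q}[H])_{(w)}/(\hat I\cap C_2(\mathbb{Q}[H])_{(w)})$. *)

theory Defs
  imports Main "HOL.Rat"
begin

definition alt_bilinear :: "('h::ab_group_add \<Rightarrow> 'h \<Rightarrow> int) \<Rightarrow> bool" where
  "alt_bilinear b \<longleftrightarrow>
     (\<forall>x y z. b (x + y) z = b x z + b y z) \<and>
     (\<forall>x y z. b x (y + z) = b x y + b x z) \<and>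
     (\<forall>x. b x x = 0)"

definition ker_mu :: "('h \<Rightarrow> 'h \<Rightarrow> int) \<Rightarrow> 'h set" where
  "ker_mu b = {x. \<forall>y. b x y = 0}"

definition H1 :: "('h \<Rightarrow> 'h \<Rightarrow> int) \<Rightarrow> 'h set" where
  "H1 b = UNIV - ker_mu b"

text \<open>Second exterior power of Q[H], realised as finitely supported antisymmetric
  functions H x H -> Q; the basis element [x] wedge [y] is wedge2 x y.\<close>
definition wedge2 :: "'h \<Rightarrow> 'h \<Rightarrow> ('h \<Rightarrow> 'h \<Rightarrow> rat)" where
  "wedge2 x y = (\<lambda>p q. (if p = x \<and> q = y then 1 else 0) - (if p = y \<and> q = x then 1 else 0))"

definition qspan :: "('a \<Rightarrow> 'b \<Rightarrow> rat) set \<Rightarrow> ('a \<Rightarrow> 'b \<Rightarrow> rat) set" where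
  "qspan S = {f. \<exists>T c. finite T \<and> T \<subseteq> S \<and> f = (\<lambda>p q. \<Sum>t\<in>T. c t * t p q)}"

text \<open>C_2(Q[S])_(w) (inside C_2(Q[H]); the inclusion map is the identity).\<close>
definition C2 :: "'h::ab_group_add set \<Rightarrow> 'h \<Rightarrow> ('h \<Rightarrow> 'h \<Rightarrow> rat) set" where
  "C2 S w = qspan {wedge2 x y | x y. x \<in> S \<and> y \<in> S \<and> x + y = w}"

text \<open>Chevalley-Eilenberg boundary C_2 -> C_1 (C_1 = finitely supported functions H -> Q).
  For f = (1/2) sum f(x,y) [x] wedge [y] we get
  d f = -(1/2) sum f(x,y) <x,y> [x+y]; in particular d([x] wedge [y]) = -<x,y>[x+y].\<close>
definition bd2 :: "('h::ab_group_add \<Rightarrow> 'h \<Rightarrow> int) \<Rightarrow> ('h \<Rightarrow> 'h \<Rightarrow> rat) \<Rightarrow> ('h \<Rightarrow> rat)" where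
  "bd2 b f = (\<lambda>w. - (1/2) * (\<Sum>(x, y) \<in> {(x, y). f x y \<noteq> 0 \<and> x + y = w}. f x y * of_int (b x y)))"

text \<open>Boundary of the basis element [a] wedge [c] wedge [d] of C_3.\<close>
definition bd3 :: "('h::ab_group_add \<Rightarrow> 'h \<Rightarrow> int) \<Rightarrow> 'h \<Rightarrow> 'h \<Rightarrow> 'h \<Rightarrow> ('h \<Rightarrow> 'h \<Rightarrow> rat)" where
  "bd3 b a c d = (\<lambda>p q.
      - of_int (b a c) * wedge2 (a + c) d p q
      + of_int (b a d) * wedge2 (a + d) c p q
      - of_int (b c d) * wedge2 (c + d) a p q)"

definition Z2 :: "('h::ab_group_add \<Rightarrow> 'h \<Rightarrow> int) \<Rightarrow> 'h \<Rightarrow> ('h \<Rightarrow> 'h \<Rightarrow> rat) set" where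
  "Z2 b w = {f \<in> C2 (H1 b) w. bd2 b f = (\<lambda>_. 0)}"

text \<open>B_2(Q[H^(1)])_(w): image of C_3(Q[H^(1)])_(w), i.e. the span of the boundaries
  of its basis elements.\<close>
definition B2 :: "('h::ab_group_add \<Rightarrow> 'h \<Rightarrow> int) \<Rightarrow> 'h \<Rightarrow> ('h \<Rightarrow> 'h \<Rightarrow> rat) set" where
  "B2 b w = qspan {bd3 b a c d | a c d. a \<in> H1 b \<and> c \<in> H1 b \<and> d \<in> H1 b \<and> a + c + d = w}"

text \<open>Degree-2 part of the ideal I-hat: the span of its (degree-2) generators.\<close>
definition Ihat2 :: "('h::ab_group_add \<Rightarrow> 'h \<Rightarrow> rat) set" where
  "Ihat2 = qspan {(\<lambda>p q. wedge2 (u + v) x p q - wedge2 u (x + v) p q - wedge2 v (x + u) p q)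
                  | u v x. True}"

end

theory Submission imports Defs "HOL-Library.Function_Algebras" begin

definition sm :: "rat \<Rightarrow> ('a \<Rightarrow> 'b \<Rightarrow> rat) \<Rightarrow> ('a \<Rightarrow> 'b \<Rightarrow> rat)" where
  "sm a f = (\<lambda>p q. a * f p q)"

lemma sm_apply[simp]: "sm a f p q = a * f p q" by (simp add: sm_def)
lemma fun_minus_apply2[simp]: "(f - g) p q = f p q - (g::'a\<Rightarrow>'b\<Rightarrow>rat) p q" by simp
lemma fun_uminus_apply2[simp]: "(- f) p q = - (f::'a\<Rightarrow>'b\<Rightarrow>rat) p q" by simp

lemma qspan_E: assumes "f \<in> qspan S"
  obtains T c where "finite T" "T \<subseteq> S" "f = (\<lambda>p q. \<Sum>t\<in>T. c t * t p q)"
proof -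
  from assms have "\<exists>T c. finite T \<and> T \<subseteq> S \<and> f = (\<lambda>p q. \<Sum>t\<in>T. c t * t p q)"
    by (simp add: qspan_def)
  then show ?thesis by (elim exE conjE) (rule that; assumption)
qed

lemma qspan_0: "0 \<in> qspan S"
  unfolding qspan_def by (rule CollectI, rule exI[of _ "{}"]) (auto simp: fun_eq_iff)

lemma qspan_base: "t \<in> S \<Longrightarrow> t \<in> qspan S"
  unfolding qspan_def by (rule CollectI, rule exI[of _ "{t}"], rule exI[of _ "\<lambda>_. 1"]) (auto simp: fun_eq_iff)

lemma qspan_add: assumes "f \<in> qspan S" "g \<in> qspan S" shows "f + g \<in> qspan S"
proof -
  obtain T1 c1 where 1: "finite T1" "T1 \<subseteq> S" "f = (\<lambda>p q. \<Sum>t\<in>T1. c1 t * t p q)"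
    by (rule qspan_E[OF assms(1)])
  obtain T2 c2 where 2: "finite T2" "T2 \<subseteq> S" "g = (\<lambda>p q. \<Sum>t\<in>T2. c2 t * t p q)"
    by (rule qspan_E[OF assms(2)])
  let ?c = "\<lambda>t. (if t \<in> T1 then c1 t else 0) + (if t \<in> T2 then c2 t else 0)"
  have "f + g = (\<lambda>p q. \<Sum>t\<in>T1\<union>T2. ?c t * t p q)"
  proof (intro ext)
    fix p q
    have a: "(\<Sum>t\<in>T1\<union>T2. (if t \<in> T1 then c1 t * t p q else 0)) = (\<Sum>t\<in>T1. c1 t * t p q)"
      using sum.inter_restrict[of "T1\<union>T2" "\<lambda>t. c1 t * t p q" T1] 1 2 by (simp add: Int_absorb1)
    have b: "(\<Sum>t\<in>T1\<union>T2. (if t \<in> T2 then c2 t * t p q else 0)) = (\<Sum>t\<in>T2. c2 t * t p q)"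
      using sum.inter_restrict[of "T1\<union>T2" "\<lambda>t. c2 t * t p q" T2] 1 2 by (simp add: Int_absorb1 Int_commute)
    have "(\<Sum>t\<in>T1\<union>T2. ?c t * t p q) = (\<Sum>t\<in>T1\<union>T2. (if t \<in> T1 then c1 t * t p q else 0) + (if t \<in> T2 then c2 t * t p q else 0))"
      by (rule sum.cong) (auto simp: distrib_right)
    also have "\<dots> = (\<Sum>t\<in>T1. c1 t * t p q) + (\<Sum>t\<in>T2. c2 t * t p q)"
      by (simp only: sum.distrib a b)
    finally show "(f + g) p q = (\<Sum>t\<in>T1\<union>T2. ?c t * t p q)" using 1 2 by simp
  qed
  then have "\<exists>T c. finite T \<and> T \<subseteq> S \<and> f + g = (\<lambda>p q. \<Sum>t\<in>T. c t * t p q)"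
    using 1 2 by (intro exI[of _ "T1 \<union> T2"] exI[of _ ?c]) simp
  then show ?thesis unfolding qspan_def by simp
qed

lemma qspan_sm: assumes "f \<in> qspan S" shows "sm a f \<in> qspan S"
proof -
  obtain T1 c1 where 1: "finite T1" "T1 \<subseteq> S" "f = (\<lambda>p q. \<Sum>t\<in>T1. c1 t * t p q)"
    by (rule qspan_E[OF assms(1)])
  have "sm a f = (\<lambda>p q. \<Sum>t\<in>T1. (a * c1 t) * t p q)"
    using 1 by (simp add: fun_eq_iff sum_distrib_left mult.assoc)
  then have "\<exists>T c. finite T \<and> T \<subseteq> S \<and> sm a f = (\<lambda>p q. \<Sum>t\<in>T. c t * t p q)"
    using 1 by (intro exI[of _ T1] exI[of _ "\<lambda>t. a * c1 t"]) simp
  then show ?thesis unfolding qspan_def by simp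
qed

lemma sm_m1: "sm (-1) f = - f" by (simp add: fun_eq_iff)

lemma qspan_uminus: "f \<in> qspan S \<Longrightarrow> - f \<in> qspan S"
  using qspan_sm[of f S "-1"] by (simp add: sm_m1)

lemma qspan_diff: "f \<in> qspan S \<Longrightarrow> g \<in> qspan S \<Longrightarrow> f - g \<in> qspan S"
  using qspan_add[of f S "-g"] qspan_uminus[of g S] by (simp add: fun_eq_iff)

lemma qspan_sum: assumes "finite I" "\<And>i. i \<in> I \<Longrightarrow> g i \<in> qspan S"
  shows "(\<lambda>p q. \<Sum>i\<in>I. a i * g i p q) \<in> qspan S"
  using assms
proof (induction I rule: finite_induct)
  case empty then show ?case using qspan_0[of S] by (simp add: zero_fun_def)
next
  case (insert i I)
  have eq: "(\<lambda>p q. \<Sum>i\<in>insert i I. a i * g i p q) = sm (a i) (g i) + (\<lambda>p q. \<Sum>i\<in>I. a i * g i p q)"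
    using insert by (simp add: fun_eq_iff)
  show ?case unfolding eq by (intro qspan_add qspan_sm) (use insert in auto)
qed

lemma qspan_trans: assumes "S \<subseteq> qspan S'" shows "qspan S \<subseteq> qspan S'"
proof
  fix f assume "f \<in> qspan S"
  then obtain T c where "finite T" "T \<subseteq> S" "f = (\<lambda>p q. \<Sum>t\<in>T. c t * t p q)"
    by (rule qspan_E)
  then show "f \<in> qspan S'" using qspan_sum[of T "\<lambda>t. t" S' c] assms by auto
qed

lemma qspan_zero_at: assumes "f \<in> qspan S" "\<And>t. t \<in> S \<Longrightarrow> t p q = 0" shows "f p q = 0"
proof -
  obtain T c where T: "finite T" "T \<subseteq> S" "f = (\<lambda>p q. \<Sum>t\<in>T. c t * t p q)"
    by (rule qspan_E[OF assms(1)])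
  have "\<forall>t\<in>T. c t * t p q = 0" using assms(2)[OF subsetD[OF T(2)]] by simp
  then have "(\<Sum>t\<in>T. c t * t p q) = 0" by (rule sum.neutral)
  then show ?thesis using T(3) by simp
qed

lemma int3: assumes "(P1::int) \<noteq> 0" "(P2::int) \<noteq> 0" shows
  "(P1+Q1\<noteq>0 \<and> P2+Q2\<noteq>0) \<or> (P1-Q1\<noteq>0 \<and> P2-Q2\<noteq>0) \<or> (P1+Q1+Q1\<noteq>0 \<and> P2+Q2+Q2\<noteq>0)"
  using assms by (smt (verit))

lemma wedge2_zero: assumes "\<not> (p = x \<and> q = y)" "\<not> (p = y \<and> q = x)" shows "wedge2 x y p q = 0"
  unfolding wedge2_def using if_not_P[OF assms(1), of "1::rat" 0] if_not_P[OF assms(2), of "1::rat" 0]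
  by (simp only: diff_zero)

lemma wedge2_weight: assumes "wedge2 x y p q \<noteq> 0" shows "p + q = x + (y::'a::ab_group_add)"
proof (cases "p = x \<and> q = y")
  case True then show ?thesis by simp
next
  case f1: False
  show ?thesis
  proof (cases "p = y \<and> q = x")
    case True then show ?thesis by (simp add: add.commute)
  next
    case False then show ?thesis using wedge2_zero[OF f1 False] assms by simp
  qed
qed

lemma C2_zero_at: assumes "f \<in> C2 A w" "\<And>x y. x \<in> A \<Longrightarrow> y \<in> A \<Longrightarrow> x + y = w \<Longrightarrow> wedge2 x y p q = 0"
  shows "f p q = 0"
  using assms(1) unfolding C2_def
proof (rule qspan_zero_at)
  fix t assume "t \<in> {wedge2 x y |x y. x \<in> A \<and> y \<in> A \<and> x + y = w}"
  then obtain x y where "t = wedge2 x y" "x \<in> A" "y \<in> A" "x + y = w" by blast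
  then show "t p q = 0" using assms(2) by simp
qed

lemma wedge2_swap: "wedge2 y x = - wedge2 x y"
  by (auto simp: wedge2_def fun_eq_iff)

locale setting =
  fixes b :: "'h::ab_group_add \<Rightarrow> 'h \<Rightarrow> int" and z :: 'h
  assumes alt: "alt_bilinear b" and zK: "z \<in> ker_mu b"
begin

lemma badd1[simp]: "b (x+y) w = b x w + b y w" using alt unfolding alt_bilinear_def by blast
lemma badd2[simp]: "b w (x+y) = b w x + b w y" using alt unfolding alt_bilinear_def by blast
lemma bxx[simp]: "b x x = 0" using alt unfolding alt_bilinear_def by blast
lemma b01[simp]: "b 0 w = 0" using badd1[of 0 0 w] by simp
lemma b02[simp]: "b w 0 = 0" using badd2[of w 0 0] by simp
lemma bminus1[simp]: "b (-x) w = - b x w" using badd1[of x "-x" w] by simp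
lemma bminus2[simp]: "b w (-x) = - b w x" using badd2[of w x "-x"] by simp
lemma bdiff1[simp]: "b (x - y) w = b x w - b y w" by (simp only: badd1 bminus1 diff_conv_add_uminus)
lemma bdiff2[simp]: "b w (x - y) = b w x - b w y" by (simp only: badd2 bminus2 diff_conv_add_uminus)
lemma anti: "b y x = - b x y"
proof -
  have "b (x+y) (x+y) = b x x + b x y + (b y x + b y y)" by (simp only: badd1 badd2)
  then show ?thesis using bxx[of "x+y"] bxx[of x] bxx[of y] by linarith
qed

lemma K_left: "k \<in> ker_mu b \<Longrightarrow> b k y = 0" by (simp add: ker_mu_def)
lemma K_right: "k \<in> ker_mu b \<Longrightarrow> b y k = 0" using anti[of y k] K_left by simp
lemma zl[simp]: "b z y = 0" using K_left[OF zK] .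
lemma zr[simp]: "b y z = 0" using K_right[OF zK] .
lemma H1_iff: "x \<in> H1 b \<longleftrightarrow> x \<notin> ker_mu b" by (simp add: H1_def)
lemma H1_ex: "x \<in> H1 b \<Longrightarrow> \<exists>y. b x y \<noteq> 0" by (simp add: H1_def ker_mu_def)
lemma H1_ex2: assumes "x \<in> H1 b" shows "\<exists>y. b y x \<noteq> 0"
proof -
  obtain y where "b x y \<noteq> 0" using H1_ex[OF assms] by blast
  then have "b y x \<noteq> 0" using anti[of x y] by simp
  then show ?thesis by blast
qed
lemma H1_of1: "b x y \<noteq> 0 \<Longrightarrow> x \<in> H1 b" by (auto simp: H1_def ker_mu_def)
lemma H1_of2: "b x y \<noteq> 0 \<Longrightarrow> y \<in> H1 b" using anti[of x y] H1_of1[of y x] by simp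
lemma K_add: "k \<in> ker_mu b \<Longrightarrow> l \<in> ker_mu b \<Longrightarrow> k + l \<in> ker_mu b" by (simp add: ker_mu_def)
lemma K_diff: "k \<in> ker_mu b \<Longrightarrow> l \<in> ker_mu b \<Longrightarrow> k - l \<in> ker_mu b" by (simp add: ker_mu_def)
lemma K_0: "0 \<in> ker_mu b" by (simp add: ker_mu_def)

lemma H1_addK: assumes "x \<in> H1 b" "k \<in> ker_mu b" shows "x + k \<in> H1 b"
proof -
  obtain y where y: "b x y \<noteq> 0" using H1_ex[OF assms(1)] by blast
  have "b (x + k) y \<noteq> 0" using y K_left[OF assms(2), of y] by simp
  then show ?thesis by (rule H1_of1)
qed

lemma H1_minus: assumes "x \<in> H1 b" shows "- x \<in> H1 b"
proof -
  obtain y where y: "b x y \<noteq> 0" using H1_ex[OF assms(1)] by blast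
  have "b (- x) y \<noteq> 0" using y by simp
  then show ?thesis by (rule H1_of1)
qed

lemma H1_Kdiff: assumes "x \<in> H1 b" "k \<in> ker_mu b" shows "k - x \<in> H1 b"
proof -
  obtain y where y: "b x y \<noteq> 0" using H1_ex[OF assms(1)] by blast
  have "b (k - x) y \<noteq> 0" using y K_left[OF assms(2), of y] by simp
  then show ?thesis by (rule H1_of1)
qed

lemma notK_add: assumes "u \<in> ker_mu b" "v \<notin> ker_mu b" shows "u + v \<notin> ker_mu b"
proof
  assume "u + v \<in> ker_mu b"
  then have "(u + v) - u \<in> ker_mu b" using K_diff assms(1) by blast
  then show False using assms(2) by simp
qed

lemma avoid2: assumes "x1 \<in> H1 b" "x2 \<in> H1 b" shows "\<exists>w. b x1 w \<noteq> 0 \<and> b x2 w \<noteq> 0"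
proof -
  obtain w1 where w1: "b x1 w1 \<noteq> 0" using H1_ex[OF assms(1)] by blast
  obtain w2 where w2: "b x2 w2 \<noteq> 0" using H1_ex[OF assms(2)] by blast
  show ?thesis
  proof (cases "b x2 w1 = 0")
    case False then show ?thesis using w1 by blast
  next
    case t: True
    show ?thesis
    proof (cases "b x1 w2 = 0")
      case False then show ?thesis using w2 by blast
    next
      case True then show ?thesis using t w1 w2 by (intro exI[of _ "w1+w2"]) simp
    qed
  qed
qed

lemma avoid3: assumes "x1 \<in> H1 b" "x2 \<in> H1 b" "x3 \<in> H1 b"
  shows "\<exists>w. b x1 w \<noteq> 0 \<and> b x2 w \<noteq> 0 \<and> b x3 w \<noteq> 0"
proof -
  obtain w where w: "b x1 w \<noteq> 0" "b x2 w \<noteq> 0" using avoid2[OF assms(1,2)] by blast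
  obtain y where y: "b x3 y \<noteq> 0" using H1_ex[OF assms(3)] by blast
  show ?thesis
  proof (cases "b x3 w = 0")
    case False then show ?thesis using w by blast
  next
    case True
    from int3[OF w, of "b x1 y" "b x2 y"]
    show ?thesis
    proof (elim disjE)
      assume "b x1 w + b x1 y \<noteq> 0 \<and> b x2 w + b x2 y \<noteq> 0"
      then show ?thesis using True y by (intro exI[of _ "w+y"]) simp
    next
      assume "b x1 w - b x1 y \<noteq> 0 \<and> b x2 w - b x2 y \<noteq> 0"
      then show ?thesis using True y by (intro exI[of _ "w-y"]) simp
    next
      assume "b x1 w + b x1 y + b x1 y \<noteq> 0 \<and> b x2 w + b x2 y + b x2 y \<noteq> 0"
      then show ?thesis using True y by (intro exI[of _ "w+y+y"]) simp
    qed
  qed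
qed

definition e :: "'h \<Rightarrow> 'h \<Rightarrow> 'h \<Rightarrow> rat" where "e x = wedge2 x (z - x)"
definition R where "R u v = e (u+v) - e u - e v"
abbreviation "S \<equiv> B2 b z"

lemma e_neg: "e (z - x) = - e x"
  unfolding e_def using wedge2_swap[of "z - x" x] by simp

lemma S_add: "f \<in> S \<Longrightarrow> g \<in> S \<Longrightarrow> f + g \<in> S" unfolding B2_def by (rule qspan_add)
lemma S_diff: "f \<in> S \<Longrightarrow> g \<in> S \<Longrightarrow> f - g \<in> S" unfolding B2_def by (rule qspan_diff)
lemma S_uminus: "f \<in> S \<Longrightarrow> - f \<in> S" unfolding B2_def by (rule qspan_uminus)
lemma S_sm: "f \<in> S \<Longrightarrow> sm a f \<in> S" unfolding B2_def by (rule qspan_sm)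
lemma S_0: "0 \<in> S" unfolding B2_def by (rule qspan_0)

lemma bd3_eq: "bd3 b a c (z - a - c) = sm (- of_int (b a c)) (R a c)"
proof -
  have 1: "wedge2 (a + c) (z - a - c) = e (a + c)" by (simp add: e_def diff_diff_eq)
  have 2: "wedge2 (a + (z - a - c)) c = - e c"
    using wedge2_swap[of "z - c" c] by (simp add: e_def algebra_simps)
  have 3: "wedge2 (c + (z - a - c)) a = - e a"
    using wedge2_swap[of "z - a" a] by (simp add: e_def algebra_simps)
  have 4: "b a (z - a - c) = - b a c" by simp
  have 5: "b c (z - a - c) = b a c" using anti[of c a] by simp
  show ?thesis unfolding bd3_def 1 2 3 4 5 R_def
    by (simp add: fun_eq_iff algebra_simps)
qed

lemma R_good: assumes "b a c \<noteq> 0" shows "R a c \<in> S"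
proof -
  have a: "a \<in> H1 b" using H1_of1[OF assms] .
  have c: "c \<in> H1 b" using H1_of2[OF assms] .
  have d: "z - a - c \<in> H1 b" using assms by (intro H1_of1[of _ c]) simp
  have "bd3 b a c (z - a - c) \<in> S" unfolding B2_def
    by (rule qspan_base, rule CollectI, rule exI[of _ a], rule exI[of _ c], rule exI[of _ "z - a - c"]) (use a c d in simp)
  then have "sm (- 1 / of_int (b a c)) (bd3 b a c (z - a - c)) \<in> S" by (rule S_sm)
  also have "sm (- 1 / of_int (b a c)) (bd3 b a c (z - a - c)) = R a c"
    unfolding bd3_eq using assms by (simp add: fun_eq_iff)
  finally show ?thesis .
qed


lemma L0: assumes "y \<in> H1 b" shows "e y + e (-y) \<in> S"
proof -
  obtain v where v: "b v y \<noteq> 0" using H1_ex2[OF assms] by blast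
  have 1: "R v y \<in> S" using R_good[OF v] .
  have 2: "R (v+y) (-y) \<in> S" using v by (intro R_good) simp
  have "e y + e (-y) = - (R v y + R (v+y) (-y))"
    by (simp add: R_def algebra_simps)
  then show ?thesis using S_uminus[OF S_add[OF 1 2]] by (simp only:)
qed

definition cy where "cy y k = e y + e (k - y)"

lemma L1: assumes "k \<in> ker_mu b" "b v y \<noteq> 0" shows "e (v+k) - e v - cy y k \<in> S"
proof -
  have 1: "R v y \<in> S" using R_good[OF assms(2)] .
  have 2: "R (v+y) (k-y) \<in> S" using assms K_left[OF assms(1)] K_right[OF assms(1)] by (intro R_good) simp
  have "e (v+k) - e v - cy y k = R (v+y) (k-y) + R v y"
    by (simp add: R_def cy_def algebra_simps)
  then show ?thesis using S_add[OF 2 1] by (simp only:)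
qed

lemma L2: assumes "k \<in> ker_mu b" "y \<in> H1 b" "y' \<in> H1 b" shows "cy y k - cy y' k \<in> S"
proof -
  obtain w where w: "b y w \<noteq> 0" "b y' w \<noteq> 0" using avoid2[OF assms(2,3)] by blast
  have w1: "b w y \<noteq> 0" "b w y' \<noteq> 0" using w anti[of y w] anti[of y' w] by auto
  have "cy y k - cy y' k = (e (w+k) - e w - cy y' k) - (e (w+k) - e w - cy y k)" by simp
  then show ?thesis using S_diff[OF L1[OF assms(1) w1(2)] L1[OF assms(1) w1(1)]] by (simp only:)
qed

definition y0 where "y0 = (SOME y. y \<in> H1 b)"
definition c' where "c' k = cy y0 k"
definition C where "C k = sm (1/2) (c' k - c' (z - k))"
definition Et where "Et x = (if x \<in> ker_mu b then C x else e x)"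

definition Phi where
  "Phi F f = (\<lambda>p q. (if p + q = z then f p q else 0) +
      (1/2) * (\<Sum>k\<in>F \<inter> ker_mu b. f k (z-k) * (C k p q - e k p q)))"

definition gen where "gen u v x = (\<lambda>p q. wedge2 (u + v) x p q - wedge2 u (x + v) p q - wedge2 v (x + u) p q)"

definition Sup where "Sup u v = {u+v, u, v, z - (u+v), z - u, z - v}"

context
  assumes ne: "H1 b \<noteq> {}"
begin

lemma y0: "y0 \<in> H1 b" unfolding y0_def using ne by (simp add: some_in_eq)

lemma Lb: assumes "v \<in> H1 b" "k \<in> ker_mu b" shows "e (v+k) - e v - c' k \<in> S"
proof -
  obtain y where y: "b v y \<noteq> 0" using H1_ex[OF assms(1)] by blast
  have "e (v+k) - e v - c' k = (e (v+k) - e v - cy y k) + (cy y k - cy y0 k)"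
    by (simp add: c'_def)
  then show ?thesis using S_add[OF L1[OF assms(2) y] L2[OF assms(2) H1_of2[OF y] y0]] by (simp only:)
qed

lemma Ladd: assumes "k1 \<in> ker_mu b" "k2 \<in> ker_mu b" shows "c' (k1+k2) - c' k1 - c' k2 \<in> S"
proof -
  have v1: "y0 + k1 \<in> H1 b" using H1_addK[OF y0 assms(1)] .
  have 1: "e (y0 + (k1+k2)) - e y0 - c' (k1+k2) \<in> S" using Lb[OF y0 K_add[OF assms]] .
  have 2: "e ((y0+k1)+k2) - e (y0+k1) - c' k2 \<in> S" using Lb[OF v1 assms(2)] .
  have 3: "e (y0+k1) - e y0 - c' k1 \<in> S" using Lb[OF y0 assms(1)] .
  have "c' (k1+k2) - c' k1 - c' k2 = ((e ((y0+k1)+k2) - e (y0+k1) - c' k2) + (e (y0+k1) - e y0 - c' k1))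
     - (e (y0 + (k1+k2)) - e y0 - c' (k1+k2))"
    by (simp add: algebra_simps)
  then show ?thesis using S_diff[OF S_add[OF 2 3] 1] by (simp only:)
qed

lemma Lz: "c' z \<in> S"
proof -
  have 1: "e (y0+z) - e y0 - c' z \<in> S" using Lb[OF y0 zK] .
  have m: "- y0 \<in> H1 b" using H1_minus[OF y0] .
  have 2: "e (-y0) + e (- (-y0)) \<in> S" using L0[OF m] .
  have ez: "e (y0 + z) = - e (-y0)" using e_neg[of "-y0"] by (simp add: algebra_simps)
  have "c' z = - (e (y0+z) - e y0 - c' z) - (e (-y0) + e (- (-y0)))"
    by (simp add: ez)
  then show ?thesis using S_diff[OF S_uminus[OF 1] 2] by (simp only:)
qed

lemma LC: assumes "k \<in> ker_mu b" shows "C k - c' k \<in> S"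
proof -
  have zk: "z - k \<in> ker_mu b" using K_diff[OF zK assms] .
  have 1: "c' (k + (z-k)) - c' k - c' (z-k) \<in> S" using Ladd[OF assms zk] .
  have eq2: "c' k + c' (z-k) = c' z - (c' (k + (z-k)) - c' k - c' (z-k))" by simp
  have 2: "c' k + c' (z-k) \<in> S" unfolding eq2 by (rule S_diff[OF Lz 1])
  have "C k - c' k = - sm (1/2) (c' k + c' (z-k))"
    by (simp add: C_def fun_eq_iff algebra_simps)
  then show ?thesis using S_uminus[OF S_sm[OF 2]] by (simp only:)
qed

lemma main_add: "Et (u+v) - Et u - Et v \<in> S"
proof (cases "u \<in> ker_mu b")
  case uK: True
  show ?thesis
  proof (cases "v \<in> ker_mu b")
    case vK: True
    have uv: "u + v \<in> ker_mu b" using K_add[OF uK vK] .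
    have "Et (u+v) - Et u - Et v = (C (u+v) - c' (u+v)) - (C u - c' u) - (C v - c' v) + (c' (u+v) - c' u - c' v)"
      using uK vK uv by (simp add: Et_def algebra_simps)
    then show ?thesis
      using S_add[OF S_diff[OF S_diff[OF LC[OF uv] LC[OF uK]] LC[OF vK]] Ladd[OF uK vK]] by (simp only:)
  next
    case vH: False
    have uv: "u + v \<notin> ker_mu b" using notK_add[OF uK vH] .
    have "Et (u+v) - Et u - Et v = (e (v+u) - e v - c' u) - (C u - c' u)"
      using uK vH uv by (simp add: Et_def algebra_simps)
    moreover have vH': "v \<in> H1 b" using vH by (simp add: H1_iff)
    ultimately show ?thesis using S_diff[OF Lb[OF vH' uK] LC[OF uK]] by (simp only:)
  qed
next
  case uH: False
  show ?thesis
  proof (cases "v \<in> ker_mu b")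
    case vK: True
    have uv: "u + v \<notin> ker_mu b" using notK_add[OF vK uH] by (simp add: add.commute)
    have "Et (u+v) - Et u - Et v = (e (u+v) - e u - c' v) - (C v - c' v)"
      using uH vK uv by (simp add: Et_def algebra_simps)
    moreover have uH': "u \<in> H1 b" using uH by (simp add: H1_iff)
    ultimately show ?thesis using S_diff[OF Lb[OF uH' vK] LC[OF vK]] by (simp only:)
  next
    case vH: False
    show ?thesis
    proof (cases "u + v \<in> ker_mu b")
      case uv: True
      have "Et (u+v) - Et u - Et v = (C (u+v) - c' (u+v)) - (cy u (u+v) - cy y0 (u+v))"
        using uH vH uv by (simp add: Et_def cy_def c'_def algebra_simps)
      moreover have uH': "u \<in> H1 b" using uH by (simp add: H1_iff)
      ultimately show ?thesis using S_diff[OF LC[OF uv] L2[OF uv uH' y0]] by (simp only:)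
    next
      case uvH: False
      have E: "Et (u+v) - Et u - Et v = R u v" using uH vH uvH by (simp add: Et_def R_def)
      show ?thesis
      proof (cases "b u v = 0")
        case False then show ?thesis using E R_good by (simp only:)
      next
        case True
        obtain w where w: "b u w \<noteq> 0" "b v w \<noteq> 0" "b (u+v) w \<noteq> 0"
          using avoid3[of u v "u+v"] uH vH uvH by (auto simp: H1_iff)
        have 1: "R v w \<in> S" using R_good w by simp
        have 2: "R u (v+w) \<in> S" using R_good w True by simp
        have 3: "R (u+v) w \<in> S" using R_good w by simp
        have "R u v = R v w + R u (v+w) - R (u+v) w" by (simp add: R_def algebra_simps)
        then show ?thesis using E S_diff[OF S_add[OF 1 2] 3] by (simp only:)
      qed
    qed
  qed
qed


lemma Phi_lin: assumes "finite T"
  shows "Phi F (\<lambda>p q. \<Sum>t\<in>T. c t * t p q) = (\<lambda>p q. \<Sum>t\<in>T. c t * Phi F t p q)"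
proof (intro ext)
  fix p q
  have "(\<Sum>k\<in>F \<inter> ker_mu b. (\<Sum>t\<in>T. c t * t k (z-k)) * (C k p q - e k p q))
     = (\<Sum>t\<in>T. c t * (\<Sum>k\<in>F \<inter> ker_mu b. t k (z-k) * (C k p q - e k p q)))"
    by (simp add: sum_distrib_left sum_distrib_right mult.assoc) (rule sum.swap)
  then show "Phi F (\<lambda>p q. \<Sum>t\<in>T. c t * t p q) p q = (\<Sum>t\<in>T. c t * Phi F t p q)"
    unfolding Phi_def by (simp add: sum_distrib_left distrib_left sum.distrib algebra_simps)
qed

lemma Phi_diff: "Phi F (f - g) = Phi F f - Phi F g"
proof (intro ext)
  fix p q
  let ?X = "\<lambda>k. C k p q - e k p q"
  have s: "(\<Sum>k\<in>F \<inter> ker_mu b. (f k (z-k) - g k (z-k)) * ?X k)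
     = (\<Sum>k\<in>F \<inter> ker_mu b. f k (z-k) * ?X k) - (\<Sum>k\<in>F \<inter> ker_mu b. g k (z-k) * ?X k)"
    by (simp only: left_diff_distrib sum_subtractf)
  show "Phi F (f - g) p q = (Phi F f - Phi F g) p q"
    unfolding Phi_def fun_minus_apply2 s by (simp add: right_diff_distrib)
qed

lemma Phi_zero: assumes "\<And>p q. f p q \<noteq> 0 \<Longrightarrow> p + q = w" "w \<noteq> z" shows "Phi F f = 0"
proof -
  have 1: "\<And>p q. p + q = z \<Longrightarrow> f p q = 0" using assms by metis
  have 2: "\<And>k. f k (z - k) = 0" using 1 by simp
  show ?thesis unfolding Phi_def by (simp add: fun_eq_iff 1 2)
qed

lemma Phi_W: assumes "f \<in> C2 (H1 b) z" shows "Phi F f = f"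
proof -
  have 1: "f p q = 0" if "p + q \<noteq> z" for p q
    using assms by (rule C2_zero_at) (use that wedge2_weight in metis)
  have 2: "f k (z - k) = 0" if "k \<in> ker_mu b" for k
    using assms by (rule C2_zero_at) (use that in \<open>auto simp: wedge2_def H1_iff\<close>)
  show ?thesis unfolding Phi_def by (auto simp: fun_eq_iff 1 2)
qed

lemma e_weight: "e y p q \<noteq> 0 \<Longrightarrow> p + q = z"
  unfolding e_def by (drule wedge2_weight) simp

lemma e_at: "e y k (z - k) = (if k = y then 1 else 0) - (if k = z - y then 1 else 0)"
proof -
  have 1: "(k = y \<and> z - k = z - y) = (k = y)" by auto
  have 2: "(k = z - y \<and> z - k = y) = (k = z - y)" by auto
  show ?thesis by (simp only: e_def wedge2_def 1 2)
qed

lemma C_neg: "C (z - k) = - C k"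
  by (simp add: C_def fun_eq_iff algebra_simps)

lemma ifmult: "((if A then 1 else 0) - (if B then 1 else 0)) * (X::rat) = (if A then X else 0) - (if B then X else 0)"
  by simp

lemma Phi_e: assumes "y \<in> F" "z - y \<in> F" "finite F" shows "Phi F (e y) = Et y"
proof -
  have P: "(if p + q = z then e y p q else 0) = e y p q" for p q using e_weight by auto
  let ?X = "\<lambda>k p q. C k p q - e k p q"
  have sumeq: "(\<Sum>k\<in>F \<inter> ker_mu b. e y k (z-k) * ?X k p q)
      = (\<Sum>k\<in>F \<inter> ker_mu b. (if k = y then ?X k p q else 0)) - (\<Sum>k\<in>F \<inter> ker_mu b. (if k = z - y then ?X k p q else 0))"
    for p q unfolding e_at ifmult by (rule sum_subtractf)
  show ?thesis
  proof (cases "y \<in> ker_mu b")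
    case False
    then have "z - y \<notin> ker_mu b" using H1_Kdiff[OF _ zK, of y] by (simp add: H1_iff)
    then show ?thesis using False unfolding Phi_def Et_def sumeq P using assms
      by (auto simp: fun_eq_iff)
  next
    case True
    then have zy: "z - y \<in> ker_mu b" using K_diff[OF zK] by blast
    show ?thesis
    proof (cases "z - y = y")
      case eq: True
      have "C y = 0" using eq by (simp add: C_def fun_eq_iff)
      moreover have "e y = 0" using eq by (simp add: e_def wedge2_def fun_eq_iff)
      ultimately show ?thesis using True unfolding Phi_def Et_def sumeq P using assms eq
        by (auto simp: fun_eq_iff)
    next
      case ne2: False
      have "Phi F (e y) p q = Et y p q" for p q
      proof -
        have "Phi F (e y) p q = e y p q + 1/2 * (?X y p q - ?X (z-y) p q)"
          unfolding Phi_def sumeq P using assms True zy ne2 by simp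
        also have "\<dots> = C y p q" using e_neg[of y] C_neg[of y] by simp (simp add: field_simps)
        finally show ?thesis using True by (simp add: Et_def)
      qed
      then show ?thesis by (simp add: fun_eq_iff)
    qed
  qed
qed

lemma Phi_gen: assumes "finite F" "Sup u v \<subseteq> F" shows "Phi F (gen u v x) \<in> S"
proof (cases "u + v + x = z")
  case True
  have x: "x = z - (u + v)" using True by (simp add: algebra_simps)
  have "gen u v x = e (u+v) - e u - e v" unfolding gen_def e_def x
    by (simp add: fun_eq_iff algebra_simps)
  then have "Phi F (gen u v x) = Et (u+v) - Et u - Et v"
    using assms by (simp add: Phi_diff Phi_e Sup_def)
  then show ?thesis using main_add by simp
next
  case False
  have "Phi F (gen u v x) = 0"
    by (rule Phi_zero[OF _ False]) (auto simp: gen_def wedge2_def algebra_simps split: if_splits)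
  then show ?thesis using S_0 by (simp only:)
qed

end

lemma bd2_zero: assumes "f \<in> C2 (H1 b) z" shows "bd2 b f = (\<lambda>_. 0)"
proof -
  have 1: "f p q = 0" if "p + q \<noteq> z" for p q
    using assms by (rule C2_zero_at) (use that wedge2_weight in metis)
  have "b x y = 0" if "f x y \<noteq> 0" for x y
  proof -
    have "y = z - x" using 1 that by (metis add_diff_cancel_left')
    then show ?thesis by simp
  qed
  then show ?thesis unfolding bd2_def by (auto simp: fun_eq_iff intro!: sum.neutral)
qed

lemma C2_trans: "T \<subseteq> C2 A w \<Longrightarrow> qspan T \<subseteq> C2 A w" unfolding C2_def by (rule qspan_trans)
lemma Ihat2_trans: "T \<subseteq> Ihat2 \<Longrightarrow> qspan T \<subseteq> Ihat2" unfolding Ihat2_def by (rule qspan_trans)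

lemma Ihat2_sm: "f \<in> Ihat2 \<Longrightarrow> sm a f \<in> Ihat2" unfolding Ihat2_def by (rule qspan_sm)

lemma B2_gen: assumes "t \<in> {bd3 b a c d |a c d. a \<in> H1 b \<and> c \<in> H1 b \<and> d \<in> H1 b \<and> a + c + d = z}"
  shows "t \<in> C2 (H1 b) z \<and> t \<in> Ihat2"
proof -
  from assms obtain a c d where t: "t = bd3 b a c d" and a: "a \<in> H1 b" and c: "c \<in> H1 b" and d: "d \<in> H1 b"
    and s: "a + c + d = z" by blast
  have dd: "d = z - a - c" using s by (simp add: algebra_simps)
  have e1: "z - d = a + c" "z - c = a + d" "z - a = c + d" unfolding s[symmetric] by (simp_all add: algebra_simps)
  have ac: "a + c \<in> H1 b" using H1_Kdiff[OF d zK] unfolding e1 .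
  have ad: "a + d \<in> H1 b" using H1_Kdiff[OF c zK] unfolding e1 .
  have cd: "c + d \<in> H1 b" using H1_Kdiff[OF a zK] unfolding e1 .
  have eq: "t = sm (- of_int (b a c)) (wedge2 (a + c) d) + sm (of_int (b a d)) (wedge2 (a + d) c)
      + sm (- of_int (b c d)) (wedge2 (c + d) a)"
    unfolding t bd3_def by (simp add: fun_eq_iff)
  have w: "wedge2 x y \<in> C2 (H1 b) z" if "x \<in> H1 b" "y \<in> H1 b" "x + y = z" for x y
    unfolding C2_def by (rule qspan_base, rule CollectI, rule exI[of _ x], rule exI[of _ y]) (use that in simp)
  have s2: "a + d + c = z" "c + d + a = z" using s by (simp_all add: ac_simps)
  have w1: "wedge2 (a+c) d \<in> C2 (H1 b) z" by (rule w[OF ac d s])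
  have w2: "wedge2 (a+d) c \<in> C2 (H1 b) z" by (rule w[OF ad c s2(1)])
  have w3: "wedge2 (c+d) a \<in> C2 (H1 b) z" by (rule w[OF cd a s2(2)])
  have Cm: "t \<in> C2 (H1 b) z" unfolding eq C2_def
    by (intro qspan_add qspan_sm w1[unfolded C2_def] w2[unfolded C2_def] w3[unfolded C2_def])
  have g: "gen a c d \<in> Ihat2" unfolding Ihat2_def gen_def
    by (rule qspan_base, rule CollectI, rule exI[of _ a], rule exI[of _ c], rule exI[of _ d]) (simp add: gen_def)
  have "t = sm (- of_int (b a c)) (gen a c d)"
    unfolding t dd bd3_eq gen_def R_def e_def by (simp add: fun_eq_iff algebra_simps)
  then have "t \<in> Ihat2" using Ihat2_sm[OF g, of "- of_int (b a c)"] by (simp only:)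
  with Cm show ?thesis by simp
qed

lemma B2_sub: "B2 b z \<subseteq> C2 (H1 b) z \<inter> Ihat2"
proof (rule Int_greatest)
  show "B2 b z \<subseteq> C2 (H1 b) z" unfolding B2_def
    by (rule C2_trans, rule subsetI, drule B2_gen, erule conjunct1)
  show "B2 b z \<subseteq> Ihat2" unfolding B2_def
    by (rule Ihat2_trans, rule subsetI, drule B2_gen, erule conjunct2)
qed

lemma C2_mono: "C2 (H1 b) z \<subseteq> C2 UNIV z"
  unfolding C2_def by (rule qspan_trans) (auto intro: qspan_base)

lemma hard: assumes "f \<in> C2 (H1 b) z" "f \<in> Ihat2" shows "f \<in> S"
proof (cases "H1 b = {}")
  case True
  have "f p q = 0" for p q using assms(1) unfolding C2_def
    by (rule qspan_zero_at) (use True in auto)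
  then have "f = 0" by (simp add: fun_eq_iff)
  then show ?thesis using S_0 by (simp only:)
next
  case ne: False
  obtain T c where T: "finite T" "T \<subseteq> {(\<lambda>p q. wedge2 (u + v) x p q - wedge2 u (x + v) p q - wedge2 v (x + u) p q)
                  | u v x. True}" and f: "f = (\<lambda>p q. \<Sum>t\<in>T. c t * t p q)"
    by (rule qspan_E[OF assms(2)[unfolded Ihat2_def]])
  have "\<forall>t\<in>T. \<exists>u v x. t = gen u v x" using T(2) unfolding gen_def by blast
  then obtain U V X where UVX: "\<And>t. t \<in> T \<Longrightarrow> t = gen (U t) (V t) (X t)" by metis
  define F where "F = (\<Union>t\<in>T. Sup (U t) (V t))"
  have F: "finite F" unfolding F_def Sup_def using T(1) by auto
  have "f = Phi F f" using Phi_W[OF ne assms(1)] by simp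
  also have "\<dots> = (\<lambda>p q. \<Sum>t\<in>T. c t * Phi F t p q)" unfolding f by (rule Phi_lin[OF ne T(1)])
  also have "\<dots> \<in> S" unfolding B2_def
  proof (rule qspan_sum[OF T(1)])
    fix t assume t: "t \<in> T"
    have "Sup (U t) (V t) \<subseteq> F" unfolding F_def using t by blast
    then have "Phi F (gen (U t) (V t) (X t)) \<in> S" using Phi_gen[OF ne F] by blast
    then show "Phi F t \<in> qspan {bd3 b a c d |a c d. a \<in> H1 b \<and> c \<in> H1 b \<and> d \<in> H1 b \<and> a + c + d = z}"
      using UVX[OF t] by (simp add: B2_def)
  qed
  finally show ?thesis .
qed

end

theorem proposition3p3:
  fixes b :: "'h::ab_group_add \<Rightarrow> 'h \<Rightarrow> int" and z :: 'h
  assumes "alt_bilinear b"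
    and "z \<in> ker_mu b"
  shows "{f \<in> Z2 b z. f \<in> Ihat2 \<inter> C2 UNIV z} = B2 b z"
proof -
  interpret setting b z using assms by unfold_locales
  show ?thesis
  proof (intro equalityI subsetI)
    fix f assume "f \<in> {f \<in> Z2 b z. f \<in> Ihat2 \<inter> C2 UNIV z}"
    then show "f \<in> B2 b z" using hard by (auto simp: Z2_def)
  next
    fix f assume f: "f \<in> B2 b z"
    then have "f \<in> C2 (H1 b) z" "f \<in> Ihat2" using B2_sub by auto
    then show "f \<in> {f \<in> Z2 b z. f \<in> Ihat2 \<inter> C2 UNIV z}"
      using bd2_zero C2_mono by (auto simp: Z2_def)
  qed
qed

end
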